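(* Let $m\ge1$, let $C\in\mathbb{R}^{m\times 3}$, and let $A,B^t\in\mathcal{Q}_0(C)$ (so $A\in\mathbb{R}^{m\times3}$, $B\in\mathbb{R}^{3\times m}$). Suppose the DSR graph $G_{A,B}$ satisfies: (i) every e-cycle of length $4$ is an s-cycle; and (ii) every o-cycle of length $6$ is an s-cycle. Then no nonreal eigenvalue of $AB$ lies in the open left half-plane $\mathbb{C}_-$.
   Context: For $M\in\mathbb{R}^{n\times m}$, $\mathcal{Q}(M)$ is the set of matrices with the same sign pattern as $M$ (entrywise signs in $\{-,0,+\}$ equal), and $\mathcal{Q}_0(M)$ is its closure. DSR graphs: for $A\in\mathbb{R}^{n\times m}$, $B\in\mathbb{R}^{m\times n}$, $G_{A,B}$ is the signed, labelled bipartite digraph with S-vertices $S_1,\dots,S_n$ and R-vertices $R_1,\dots,R_m$, having an arc $R_j\to S_i$ of sign $\mathrm{sign}(A_{ij})$ iff $A_{ij}\ne0$, and an arc $S_i\to R_j$ of sign $\mathrm{sign}(B_{ji})$ iff $B_{ji}\neq 0$. A pair of antiparallel arcs between $S_i$ and $R_j$ with the same sign is regarded as a single undirected edge (traversable in either direction). An edge arising from $A_{ij}\ne0$ (R-to-S or undirected) has label $|A_{ij}|$; an edge with only S-to-R orientation has label $\infty$. Walks traverse edges consistently with their orientation; the length of a walk is its number of edges (with multiplicity), its sign is the product of its edge signs. A cycle is a nonempty closed walk repeating no vertex except first$=$last. The parity of a cycle $W$ (of even length) is $P(W)=(-1)^{|W|/2}\mathrm{sign}(W)$; it is an e-cycle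 if $P=1$ and an o-cycle if $P=-1$. A cycle $(e_1,\dots,e_{2r})$ is an s-cycle if all its labels are finite and $\prod_{i=1}^r l(e_{2i-1})=\prod_{i=1}^r l(e_{2i})$. *)

theory Defs
  imports "Jordan_Normal_Form.Char_Poly"
begin

definition in_Q0 :: "real mat \<Rightarrow> real mat \<Rightarrow> bool" where
  "in_Q0 C M \<longleftrightarrow> dim_row M = dim_row C \<and> dim_col M = dim_col C \<and>
     (\<forall>i < dim_row C. \<forall>j < dim_col C. M $$ (i,j) = 0 \<or> sgn (M $$ (i,j)) = sgn (C $$ (i,j)))"

datatype dsr_vertex = SV nat | RV nat

definition dsr_vertex_ok :: "real mat \<Rightarrow> dsr_vertex \<Rightarrow> bool" where
  "dsr_vertex_ok A v = (case v of SV i \<Rightarrow> i < dim_row A | RV j \<Rightarrow> j < dim_col A)"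

(* u -> v can be traversed in G_{A,B}. Between any ordered pair of vertices there is at
   most one traversable edge (arc or undirected edge), so walks are determined by
   their vertex sequence. *)
definition dsr_step :: "real mat \<Rightarrow> real mat \<Rightarrow> dsr_vertex \<Rightarrow> dsr_vertex \<Rightarrow> bool" where
  "dsr_step A B u v = (dsr_vertex_ok A u \<and> dsr_vertex_ok A v \<and>
     (case (u, v) of
        (SV i, RV j) \<Rightarrow> B $$ (j, i) \<noteq> 0
      | (RV j, SV i) \<Rightarrow> A $$ (i, j) \<noteq> 0
      | _ \<Rightarrow> False))"

definition dsr_step_sign :: "real mat \<Rightarrow> real mat \<Rightarrow> dsr_vertex \<Rightarrow> dsr_vertex \<Rightarrow> real" where
  "dsr_step_sign A B u v =
     (case (u, v) of
        (SV i, RV j) \<Rightarrow> sgn (B $$ (j, i))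
      | (RV j, SV i) \<Rightarrow> sgn (A $$ (i, j))
      | _ \<Rightarrow> 0)"

(* label of the edge used when traversing u -> v; None stands for the label \<infinity>.
   S->R traversal uses the undirected edge (label |A_ij|) iff A_ij and B_ji are nonzero
   with the same sign; otherwise it uses an S-to-R arc only (label \<infinity>). *)
definition dsr_step_label :: "real mat \<Rightarrow> real mat \<Rightarrow> dsr_vertex \<Rightarrow> dsr_vertex \<Rightarrow> real option" where
  "dsr_step_label A B u v =
     (case (u, v) of
        (SV i, RV j) \<Rightarrow> (if A $$ (i, j) \<noteq> 0 \<and> sgn (A $$ (i, j)) = sgn (B $$ (j, i))
                          then Some \<bar>A $$ (i, j)\<bar> else None)
      | (RV j, SV i) \<Rightarrow> Some \<bar>A $$ (i, j)\<bar>
      | _ \<Rightarrow> None)"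

definition dsr_cycle :: "real mat \<Rightarrow> real mat \<Rightarrow> dsr_vertex list \<Rightarrow> bool" where
  "dsr_cycle A B vs \<longleftrightarrow> vs \<noteq> [] \<and> distinct vs \<and>
     (\<forall>k < length vs. dsr_step A B (vs ! k) (vs ! ((k + 1) mod length vs)))"

definition cyc_edge_sign :: "real mat \<Rightarrow> real mat \<Rightarrow> dsr_vertex list \<Rightarrow> nat \<Rightarrow> real" where
  "cyc_edge_sign A B vs k = dsr_step_sign A B (vs ! k) (vs ! ((k + 1) mod length vs))"

definition cyc_edge_label :: "real mat \<Rightarrow> real mat \<Rightarrow> dsr_vertex list \<Rightarrow> nat \<Rightarrow> real option" where
  "cyc_edge_label A B vs k = dsr_step_label A B (vs ! k) (vs ! ((k + 1) mod length vs))"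

definition cycle_sign :: "real mat \<Rightarrow> real mat \<Rightarrow> dsr_vertex list \<Rightarrow> real" where
  "cycle_sign A B vs = (\<Prod>k < length vs. cyc_edge_sign A B vs k)"

definition cycle_parity :: "real mat \<Rightarrow> real mat \<Rightarrow> dsr_vertex list \<Rightarrow> real" where
  "cycle_parity A B vs = (-1) ^ (length vs div 2) * cycle_sign A B vs"

definition e_cycle :: "real mat \<Rightarrow> real mat \<Rightarrow> dsr_vertex list \<Rightarrow> bool" where
  "e_cycle A B vs \<longleftrightarrow> dsr_cycle A B vs \<and> cycle_parity A B vs = 1"

definition o_cycle :: "real mat \<Rightarrow> real mat \<Rightarrow> dsr_vertex list \<Rightarrow> bool" where
  "o_cycle A B vs \<longleftrightarrow> dsr_cycle A B vs \<and> cycle_parity A B vs = -1"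

(* s-cycle (e_1,...,e_{2r}): all labels finite and prod_{i=1}^r l(e_{2i-1}) = prod_{i=1}^r l(e_{2i}).
   Edge e_{k+1} has index k here. *)
definition s_cycle :: "real mat \<Rightarrow> real mat \<Rightarrow> dsr_vertex list \<Rightarrow> bool" where
  "s_cycle A B vs \<longleftrightarrow> dsr_cycle A B vs \<and> even (length vs) \<and>
     (\<forall>k < length vs. cyc_edge_label A B vs k \<noteq> None) \<and>
     (\<Prod>i < length vs div 2. the (cyc_edge_label A B vs (2 * i))) =
     (\<Prod>i < length vs div 2. the (cyc_edge_label A B vs (2 * i + 1)))"

end

theory Submission
  imports Defs
begin


definition trf :: "(nat \<Rightarrow> nat \<Rightarrow> real) \<Rightarrow> real" where
  "trf U = U 0 0 + U 1 1 + U 2 2"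
definition Qf :: "(nat \<Rightarrow> nat \<Rightarrow> real) \<Rightarrow> (nat \<Rightarrow> nat \<Rightarrow> real) \<Rightarrow> real" where
  "Qf V W = (V 0 0 * W 1 1 + W 0 0 * V 1 1 - V 0 1 * W 1 0 - W 0 1 * V 1 0)
          + (V 0 0 * W 2 2 + W 0 0 * V 2 2 - V 0 2 * W 2 0 - W 0 2 * V 2 0)
          + (V 1 1 * W 2 2 + W 1 1 * V 2 2 - V 1 2 * W 2 1 - W 1 2 * V 2 1)"
definition d3 :: "(nat \<Rightarrow> nat \<Rightarrow> real) \<Rightarrow> (nat \<Rightarrow> nat \<Rightarrow> real) \<Rightarrow> (nat \<Rightarrow> nat \<Rightarrow> real) \<Rightarrow> real" where
  "d3 R S T = R 0 0 * S 1 1 * T 2 2 - R 0 0 * S 1 2 * T 2 1 - R 0 1 * S 1 0 * T 2 2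
            + R 0 1 * S 1 2 * T 2 0 + R 0 2 * S 1 0 * T 2 1 - R 0 2 * S 1 1 * T 2 0"
definition FF where
  "FF U V W = trf U * Qf V W + trf V * Qf U W + trf W * Qf U V
     - (d3 U V W + d3 U W V + d3 V U W + d3 V W U + d3 W U V + d3 W V U)"

definition qt :: "(nat \<Rightarrow> nat \<Rightarrow> real) \<Rightarrow> (nat \<Rightarrow> nat \<Rightarrow> real) \<Rightarrow> nat \<Rightarrow> nat \<Rightarrow> nat \<Rightarrow> nat \<Rightarrow> real" where
  "qt x y a b j k = (y a j * y b k - y a k * y b j) * (x a j * x b k - x a k * x b j)"

definition XX :: "(nat \<Rightarrow> nat \<Rightarrow> real) \<Rightarrow> nat \<Rightarrow> nat \<Rightarrow> nat \<Rightarrow> nat \<Rightarrow> nat \<Rightarrow> nat \<Rightarrow> real" where "XX x r1 r2 r3 a b c = x r1 a * x r2 b * x r3 c"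

lemma key_identity:
  fixes x y :: "nat \<Rightarrow> nat \<Rightarrow> real"
  defines "P \<equiv> \<lambda>r j k. y r j * x r k"
  shows "FF (P r1) (P r2) (P r3) =
     x r1 0 * y r1 0 * (qt x y r2 r3 0 1 + qt x y r2 r3 0 2) + x r1 1 * y r1 1 * (qt x y r2 r3 0 1 + qt x y r2 r3 1 2)
   + x r1 2 * y r1 2 * (qt x y r2 r3 0 2 + qt x y r2 r3 1 2)
   + x r2 0 * y r2 0 * (qt x y r1 r3 0 1 + qt x y r1 r3 0 2) + x r2 1 * y r2 1 * (qt x y r1 r3 0 1 + qt x y r1 r3 1 2)
   + x r2 2 * y r2 2 * (qt x y r1 r3 0 2 + qt x y r1 r3 1 2)
   + x r3 0 * y r3 0 * (qt x y r1 r2 0 1 + qt x y r1 r2 0 2) + x r3 1 * y r3 1 * (qt x y r1 r2 0 1 + qt x y r1 r2 1 2)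
   + x r3 2 * y r3 2 * (qt x y r1 r2 0 2 + qt x y r1 r2 1 2)
   + (2 * (XX x r1 r2 r3 0 1 2 * XX y r1 r2 r3 0 1 2 + XX x r1 r2 r3 0 2 1 * XX y r1 r2 r3 0 2 1
         + XX x r1 r2 r3 1 0 2 * XX y r1 r2 r3 1 0 2 + XX x r1 r2 r3 1 2 0 * XX y r1 r2 r3 1 2 0
         + XX x r1 r2 r3 2 0 1 * XX y r1 r2 r3 2 0 1 + XX x r1 r2 r3 2 1 0 * XX y r1 r2 r3 2 1 0)
     - (XX x r1 r2 r3 1 2 0 * XX y r1 r2 r3 0 1 2 + XX x r1 r2 r3 2 0 1 * XX y r1 r2 r3 0 1 2
      + XX x r1 r2 r3 2 1 0 * XX y r1 r2 r3 0 2 1 + XX x r1 r2 r3 1 0 2 * XX y r1 r2 r3 0 2 1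
      + XX x r1 r2 r3 0 2 1 * XX y r1 r2 r3 1 0 2 + XX x r1 r2 r3 2 1 0 * XX y r1 r2 r3 1 0 2
      + XX x r1 r2 r3 2 0 1 * XX y r1 r2 r3 1 2 0 + XX x r1 r2 r3 0 1 2 * XX y r1 r2 r3 1 2 0
      + XX x r1 r2 r3 0 1 2 * XX y r1 r2 r3 2 0 1 + XX x r1 r2 r3 1 2 0 * XX y r1 r2 r3 2 0 1
      + XX x r1 r2 r3 1 0 2 * XX y r1 r2 r3 2 1 0 + XX x r1 r2 r3 0 2 1 * XX y r1 r2 r3 2 1 0))"
  unfolding FF_def trf_def Qf_def d3_def qt_def XX_def P_def
  by (simp add: algebra_simps)



lemma XXprod: "XX x r1 r2 r3 a b c * XX y r1 r2 r3 a b c = (x r1 a * y r1 a) * (x r2 b * y r2 b) * (x r3 c * y r3 c)"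
  unfolding XX_def by (simp only: mult_ac)

lemma sum_bound:
  fixes p0 p1 p2 p3 p4 p5 b0 b1 b2 b3 b4 b5 b6 b7 b8 b9 b10 b11 :: real
  assumes "b0 \<le> p0" "b1 \<le> p0" "b2 \<le> p1" "b3 \<le> p1" "b4 \<le> p2" "b5 \<le> p2"
    "b6 \<le> p3" "b7 \<le> p3" "b8 \<le> p4" "b9 \<le> p4" "b10 \<le> p5" "b11 \<le> p5"
  shows "0 \<le> 2 * (p0 + p1 + p2 + p3 + p4 + p5) - (b0 + b1 + b2 + b3 + b4 + b5 + b6 + b7 + b8 + b9 + b10 + b11)"
  using assms by argo

lemma key_ineq:
  fixes x y :: "nat \<Rightarrow> nat \<Rightarrow> real"
  assumes sign: "\<And>r j. r \<in> {r1,r2,r3} \<Longrightarrow> j < 3 \<Longrightarrow> x r j * y r j \<ge> 0"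
    and four: "\<And>a b j k. a \<in> {r1,r2,r3} \<Longrightarrow> b \<in> {r1,r2,r3} \<Longrightarrow> a \<noteq> b \<Longrightarrow> j < 3 \<Longrightarrow> k < 3 \<Longrightarrow> qt x y a b j k \<ge> 0"
    and dist: "r1 \<noteq> r2" "r1 \<noteq> r3" "r2 \<noteq> r3"
    and six: "\<And>a b c. a < 3 \<Longrightarrow> b < 3 \<Longrightarrow> c < 3 \<Longrightarrow> distinct [a,b,c] \<Longrightarrow>
       XX x r1 r2 r3 b c a * XX y r1 r2 r3 a b c \<le> XX x r1 r2 r3 a b c * XX y r1 r2 r3 a b c \<and>
       XX x r1 r2 r3 c a b * XX y r1 r2 r3 a b c \<le> XX x r1 r2 r3 a b c * XX y r1 r2 r3 a b c"
  shows "FF (\<lambda>j k. y r1 j * x r1 k) (\<lambda>j k. y r2 j * x r2 k) (\<lambda>j k. y r3 j * x r3 k) \<ge> 0"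
proof -
  have s: "x r j * y r j \<ge> 0" if "r \<in> {r1,r2,r3}" "j \<in> {0,1,2}" for r j
    using sign that by auto
  have q: "qt x y a b j k \<ge> 0" if "(a,b) \<in> {(r2,r3),(r1,r3),(r1,r2)}" "j \<in> {0,1,2}" "k \<in> {0,1,2}" for a b j k
    using four that dist by auto
  have t: "\<And>a b c. a \<in> {0,1,2} \<Longrightarrow> b \<in> {0,1,2} \<Longrightarrow> c \<in> {0,1,2} \<Longrightarrow> XX x r1 r2 r3 a b c * XX y r1 r2 r3 a b c \<ge> 0"
    unfolding XXprod by (intro mult_nonneg_nonneg s) auto
  have sx: "\<And>a b c. a \<in> {0,1,2} \<Longrightarrow> b \<in> {0,1,2} \<Longrightarrow> c \<in> {0,1,2} \<Longrightarrow> distinct [a,b,c] \<Longrightarrow>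
       XX x r1 r2 r3 b c a * XX y r1 r2 r3 a b c \<le> XX x r1 r2 r3 a b c * XX y r1 r2 r3 a b c \<and>
       XX x r1 r2 r3 c a b * XX y r1 r2 r3 a b c \<le> XX x r1 r2 r3 a b c * XX y r1 r2 r3 a b c"
    using six by auto
  note I = key_identity
  have e0: "0 \<le> x r1 0 * y r1 0 * (qt x y r2 r3 0 1 + qt x y r2 r3 0 2)" by (intro mult_nonneg_nonneg add_nonneg_nonneg s q) simp_all
  have e1: "0 \<le> x r1 1 * y r1 1 * (qt x y r2 r3 0 1 + qt x y r2 r3 1 2)" by (intro mult_nonneg_nonneg add_nonneg_nonneg s q) simp_all
  have e2: "0 \<le> x r1 2 * y r1 2 * (qt x y r2 r3 0 2 + qt x y r2 r3 1 2)" by (intro mult_nonneg_nonneg add_nonneg_nonneg s q) simp_all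
  have e3: "0 \<le> x r2 0 * y r2 0 * (qt x y r1 r3 0 1 + qt x y r1 r3 0 2)" by (intro mult_nonneg_nonneg add_nonneg_nonneg s q) simp_all
  have e4: "0 \<le> x r2 1 * y r2 1 * (qt x y r1 r3 0 1 + qt x y r1 r3 1 2)" by (intro mult_nonneg_nonneg add_nonneg_nonneg s q) simp_all
  have e5: "0 \<le> x r2 2 * y r2 2 * (qt x y r1 r3 0 2 + qt x y r1 r3 1 2)" by (intro mult_nonneg_nonneg add_nonneg_nonneg s q) simp_all
  have e6: "0 \<le> x r3 0 * y r3 0 * (qt x y r1 r2 0 1 + qt x y r1 r2 0 2)" by (intro mult_nonneg_nonneg add_nonneg_nonneg s q) simp_all
  have e7: "0 \<le> x r3 1 * y r3 1 * (qt x y r1 r2 0 1 + qt x y r1 r2 1 2)" by (intro mult_nonneg_nonneg add_nonneg_nonneg s q) simp_all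
  have e8: "0 \<le> x r3 2 * y r3 2 * (qt x y r1 r2 0 2 + qt x y r1 r2 1 2)" by (intro mult_nonneg_nonneg add_nonneg_nonneg s q) simp_all
  have s0: "XX x r1 r2 r3 1 2 0 * XX y r1 r2 r3 0 1 2 \<le> XX x r1 r2 r3 0 1 2 * XX y r1 r2 r3 0 1 2 \<and> XX x r1 r2 r3 2 0 1 * XX y r1 r2 r3 0 1 2 \<le> XX x r1 r2 r3 0 1 2 * XX y r1 r2 r3 0 1 2" by (rule sx) auto
  have t0: "XX x r1 r2 r3 0 1 2 * XX y r1 r2 r3 0 1 2 \<ge> 0" by (rule t) auto
  have s1: "XX x r1 r2 r3 2 1 0 * XX y r1 r2 r3 0 2 1 \<le> XX x r1 r2 r3 0 2 1 * XX y r1 r2 r3 0 2 1 \<and> XX x r1 r2 r3 1 0 2 * XX y r1 r2 r3 0 2 1 \<le> XX x r1 r2 r3 0 2 1 * XX y r1 r2 r3 0 2 1" by (rule sx) auto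
  have t1: "XX x r1 r2 r3 0 2 1 * XX y r1 r2 r3 0 2 1 \<ge> 0" by (rule t) auto
  have s2: "XX x r1 r2 r3 0 2 1 * XX y r1 r2 r3 1 0 2 \<le> XX x r1 r2 r3 1 0 2 * XX y r1 r2 r3 1 0 2 \<and> XX x r1 r2 r3 2 1 0 * XX y r1 r2 r3 1 0 2 \<le> XX x r1 r2 r3 1 0 2 * XX y r1 r2 r3 1 0 2" by (rule sx) auto
  have t2: "XX x r1 r2 r3 1 0 2 * XX y r1 r2 r3 1 0 2 \<ge> 0" by (rule t) auto
  have s3: "XX x r1 r2 r3 2 0 1 * XX y r1 r2 r3 1 2 0 \<le> XX x r1 r2 r3 1 2 0 * XX y r1 r2 r3 1 2 0 \<and> XX x r1 r2 r3 0 1 2 * XX y r1 r2 r3 1 2 0 \<le> XX x r1 r2 r3 1 2 0 * XX y r1 r2 r3 1 2 0" by (rule sx) auto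
  have t3: "XX x r1 r2 r3 1 2 0 * XX y r1 r2 r3 1 2 0 \<ge> 0" by (rule t) auto
  have s4: "XX x r1 r2 r3 0 1 2 * XX y r1 r2 r3 2 0 1 \<le> XX x r1 r2 r3 2 0 1 * XX y r1 r2 r3 2 0 1 \<and> XX x r1 r2 r3 1 2 0 * XX y r1 r2 r3 2 0 1 \<le> XX x r1 r2 r3 2 0 1 * XX y r1 r2 r3 2 0 1" by (rule sx) auto
  have t4: "XX x r1 r2 r3 2 0 1 * XX y r1 r2 r3 2 0 1 \<ge> 0" by (rule t) auto
  have s5: "XX x r1 r2 r3 1 0 2 * XX y r1 r2 r3 2 1 0 \<le> XX x r1 r2 r3 2 1 0 * XX y r1 r2 r3 2 1 0 \<and> XX x r1 r2 r3 0 2 1 * XX y r1 r2 r3 2 1 0 \<le> XX x r1 r2 r3 2 1 0 * XX y r1 r2 r3 2 1 0" by (rule sx) auto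
  have t5: "XX x r1 r2 r3 2 1 0 * XX y r1 r2 r3 2 1 0 \<ge> 0" by (rule t) auto
  have R: "0 \<le> 2 * (XX x r1 r2 r3 0 1 2 * XX y r1 r2 r3 0 1 2 + XX x r1 r2 r3 0 2 1 * XX y r1 r2 r3 0 2 1
         + XX x r1 r2 r3 1 0 2 * XX y r1 r2 r3 1 0 2 + XX x r1 r2 r3 1 2 0 * XX y r1 r2 r3 1 2 0
         + XX x r1 r2 r3 2 0 1 * XX y r1 r2 r3 2 0 1 + XX x r1 r2 r3 2 1 0 * XX y r1 r2 r3 2 1 0)
     - (XX x r1 r2 r3 1 2 0 * XX y r1 r2 r3 0 1 2 + XX x r1 r2 r3 2 0 1 * XX y r1 r2 r3 0 1 2
      + XX x r1 r2 r3 2 1 0 * XX y r1 r2 r3 0 2 1 + XX x r1 r2 r3 1 0 2 * XX y r1 r2 r3 0 2 1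
      + XX x r1 r2 r3 0 2 1 * XX y r1 r2 r3 1 0 2 + XX x r1 r2 r3 2 1 0 * XX y r1 r2 r3 1 0 2
      + XX x r1 r2 r3 2 0 1 * XX y r1 r2 r3 1 2 0 + XX x r1 r2 r3 0 1 2 * XX y r1 r2 r3 1 2 0
      + XX x r1 r2 r3 0 1 2 * XX y r1 r2 r3 2 0 1 + XX x r1 r2 r3 1 2 0 * XX y r1 r2 r3 2 0 1
      + XX x r1 r2 r3 1 0 2 * XX y r1 r2 r3 2 1 0 + XX x r1 r2 r3 0 2 1 * XX y r1 r2 r3 2 1 0)"
    by (rule sum_bound) (use s0 s1 s2 s3 s4 s5 in auto)
  show ?thesis unfolding I
    by (intro add_nonneg_nonneg e0 e1 e2 e3 e4 e5 e6 e7 e8 R)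
qed



lemma rep_identity:
  fixes x y :: "nat \<Rightarrow> nat \<Rightarrow> real"
  shows "FF (\<lambda>j k. y a j * x a k) (\<lambda>j k. y a j * x a k) (\<lambda>j k. y b j * x b k)
     = 2 * (x a 0 * y a 0 + x a 1 * y a 1 + x a 2 * y a 2) * (qt x y a b 0 1 + qt x y a b 0 2 + qt x y a b 1 2)"
  unfolding FF_def trf_def Qf_def d3_def qt_def
  by (simp add: algebra_simps)

lemma Qf_sym: "Qf V W = Qf W V" unfolding Qf_def by (simp add: algebra_simps)
lemma FF_sym1: "FF U V W = FF V U W"
  unfolding FF_def using Qf_sym[of U W] Qf_sym[of V W] Qf_sym[of U V] by (simp add: algebra_simps)
lemma FF_sym2: "FF U V W = FF U W V"
  unfolding FF_def using Qf_sym[of U W] Qf_sym[of V W] Qf_sym[of U V] by (simp add: algebra_simps)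

lemma trf_add: "trf (\<lambda>j k. U j k + U' j k) = trf U + trf U'" unfolding trf_def by simp
lemma Qf_add1: "Qf (\<lambda>j k. U j k + U' j k) W = Qf U W + Qf U' W" unfolding Qf_def by (simp add: algebra_simps)
lemma Qf_add2: "Qf W (\<lambda>j k. U j k + U' j k) = Qf W U + Qf W U'" unfolding Qf_def by (simp add: algebra_simps)
lemma d3_add1: "d3 (\<lambda>j k. U j k + U' j k) S T = d3 U S T + d3 U' S T" unfolding d3_def by (simp add: algebra_simps)
lemma d3_add2: "d3 S (\<lambda>j k. U j k + U' j k) T = d3 S U T + d3 S U' T" unfolding d3_def by (simp add: algebra_simps)
lemma d3_add3: "d3 S T (\<lambda>j k. U j k + U' j k) = d3 S T U + d3 S T U'" unfolding d3_def by (simp add: algebra_simps)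

lemma FF_add1: "FF (\<lambda>j k. U j k + U' j k) V W = FF U V W + FF U' V W"
  unfolding FF_def trf_add Qf_add1 Qf_add2 d3_add1 d3_add2 d3_add3 by (simp add: algebra_simps)
lemma FF_zero1: "FF (\<lambda>j k. 0) V W = 0"
  unfolding FF_def trf_def Qf_def d3_def by simp

lemma FF_sum1: fixes n :: nat shows "FF (\<lambda>j k. \<Sum>i<n. P i j k) V W = (\<Sum>i<n. FF (P i) V W)"
proof (induction n)
  case 0 then show ?case by (simp add: FF_zero1)
next
  case (Suc n)
  have "FF (\<lambda>j k. \<Sum>i<Suc n. P i j k) V W = FF (\<lambda>j k. (\<Sum>i<n. P i j k) + P n j k) V W" by simp
  also have "\<dots> = FF (\<lambda>j k. (\<Sum>i<n. P i j k)) V W + FF (P n) V W"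
    using FF_add1[of "\<lambda>j k. (\<Sum>i<n. P i j k)" "P n"] by simp
  finally show ?case using Suc by simp
qed

lemma FF_sum2: fixes n :: nat shows "FF U (\<lambda>j k. \<Sum>i<n. P i j k) W = (\<Sum>i<n. FF U (P i) W)"
proof -
  have "FF U (\<lambda>j k. \<Sum>i<n. P i j k) W = FF (\<lambda>j k. \<Sum>i<n. P i j k) U W" by (rule FF_sym1)
  also have "\<dots> = (\<Sum>i<n. FF (P i) U W)" by (rule FF_sum1)
  also have "\<dots> = (\<Sum>i<n. FF U (P i) W)" by (intro sum.cong refl FF_sym1)
  finally show ?thesis .
qed

lemma FF_sum3': fixes n :: nat shows "FF U V (\<lambda>j k. \<Sum>i<n. P i j k) = (\<Sum>i<n. FF U V (P i))"
proof -
  have "FF U V (\<lambda>j k. \<Sum>i<n. P i j k) = FF U (\<lambda>j k. \<Sum>i<n. P i j k) V" by (rule FF_sym2)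
  also have "\<dots> = (\<Sum>i<n. FF U (P i) V)" by (rule FF_sum2)
  also have "\<dots> = (\<Sum>i<n. FF U V (P i))" by (intro sum.cong refl FF_sym2)
  finally show ?thesis .
qed

lemma FF_sum3: fixes n :: nat shows "FF (\<lambda>j k. \<Sum>i<n. P i j k) (\<lambda>j k. \<Sum>i<n. P i j k) (\<lambda>j k. \<Sum>i<n. P i j k)
   = (\<Sum>i<n. \<Sum>l<n. \<Sum>p<n. FF (P i) (P l) (P p))"
  by (simp only: FF_sum1 FF_sum2 FF_sum3')




lemma cubic_root:
  fixes z w0 w1 w2 n00 n01 n02 n10 n11 n12 n20 n21 n22 :: complex
  assumes E0: "n00*w0 + n01*w1 + n02*w2 = z*w0"
    and E1: "n10*w0 + n11*w1 + n12*w2 = z*w1"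
    and E2: "n20*w0 + n21*w1 + n22*w2 = z*w2"
    and nz: "w0 \<noteq> 0 \<or> w1 \<noteq> 0 \<or> w2 \<noteq> 0"
  shows "z^3 - (n00+n11+n22)*z^2 + (n00*n11 - n01*n10 + n00*n22 - n02*n20 + n11*n22 - n12*n21)*z
     - (n00*n11*n22 - n00*n12*n21 - n01*n10*n22 + n01*n12*n20 + n02*n10*n21 - n02*n11*n20) = 0"
    (is "?p = 0")
proof -
  define k00 where "k00 = n00 - z"
  define k11 where "k11 = n11 - z"
  define k22 where "k22 = n22 - z"
  define d where "d = k00*k11*k22 - k00*n12*n21 - n01*n10*k22 + n01*n12*n20 + n02*n10*n21 - n02*k11*n20"
  define K0 where "K0 = k00*w0 + n01*w1 + n02*w2"
  define K1 where "K1 = n10*w0 + k11*w1 + n12*w2"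
  define K2 where "K2 = n20*w0 + n21*w1 + k22*w2"
  have K: "K0 = 0" "K1 = 0" "K2 = 0" using E0 E1 E2 unfolding K0_def K1_def K2_def k00_def k11_def k22_def
    by (simp_all add: algebra_simps)
  have pd: "?p = - d" unfolding d_def k00_def k11_def k22_def
    by (simp add: algebra_simps power2_eq_square power3_eq_cube)
  have "d * w0 = (k11*k22 - n12*n21)*K0 - (n01*k22 - n02*n21)*K1 + (n01*n12 - n02*k11)*K2"
    unfolding d_def K0_def K1_def K2_def by (simp add: algebra_simps)
  hence 0: "d * w0 = 0" using K by simp
  have "d * w1 = - (n10*k22 - n12*n20)*K0 + (k00*k22 - n02*n20)*K1 - (k00*n12 - n02*n10)*K2"
    unfolding d_def K0_def K1_def K2_def by (simp add: algebra_simps)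
  hence 1: "d * w1 = 0" using K by simp
  have "d * w2 = (n10*n21 - k11*n20)*K0 - (k00*n21 - n01*n20)*K1 + (k00*k11 - n01*n10)*K2"
    unfolding d_def K0_def K1_def K2_def by (simp add: algebra_simps)
  hence 2: "d * w2 = 0" using K by simp
  have "d = 0" using 0 1 2 nz by auto
  then show ?thesis using pd by simp
qed

lemma re_im:
  fixes c1 c2 c3 :: real and z :: complex
  assumes eq: "z^3 - of_real c1 * z^2 + of_real c2 * z - of_real c3 = 0" and b: "Im z \<noteq> 0"
  shows "c1*c2 - c3 = 2 * Re z * ((c1 - Re z)^2 + (Im z)^2)"
proof -
  define a where "a = Re z"
  define bb where "bb = Im z"
  have z: "z = Complex a bb" by (simp add: a_def bb_def complex_eq_iff)
  have R: "a^3 - 3*a*bb^2 - c1*(a^2-bb^2) + c2*a - c3 = 0"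
    using arg_cong[OF eq, of Re] unfolding z
    by (simp add: power3_eq_cube power2_eq_square algebra_simps)
  have I: "bb * (3*a^2 - bb^2 - 2*c1*a + c2) = 0"
    using arg_cong[OF eq, of Im] unfolding z
    by (simp add: power3_eq_cube power2_eq_square algebra_simps)
  have I2: "3*a^2 - bb^2 - 2*c1*a + c2 = 0" using I b by (simp add: bb_def)
  have "c1*c2 - c3 - 2 * a * ((c1 - a)^2 + bb^2) = (a^3 - 3*a*bb^2 - c1*(a^2-bb^2) + c2*a - c3) + (c1 - a) * (3*a^2 - bb^2 - 2*c1*a + c2)"
    by (simp add: algebra_simps power2_eq_square power3_eq_cube)
  hence "c1*c2 - c3 = 2 * a * ((c1 - a)^2 + bb^2)" using R I2 by simp
  then show ?thesis by (simp add: a_def bb_def)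
qed




lemma sgn_prod_nonneg:
  fixes a b c :: real
  assumes "a = 0 \<or> sgn a = sgn c" "b = 0 \<or> sgn b = sgn c"
  shows "0 \<le> a * b"
  using assms by (auto simp: sgn_if zero_le_mult_iff split: if_splits)

lemma pos_sgn_eq: "0 < x * y \<Longrightarrow> sgn x = sgn (y::real)"
  by (auto simp: zero_less_mult_iff sgn_if)

lemma all_less_Suc': "(\<forall>k<Suc n. P k) \<longleftrightarrow> (\<forall>k<n. P k) \<and> P n"
  by (auto simp: less_Suc_eq)

lemma sign4:
  fixes a1 a2 a3 a4 b1 b3 :: real
  assumes pos: "b1 * a2 * b3 * a4 > 0" and s1: "sgn a1 = sgn b1" and s3: "sgn a3 = sgn b3"
    and ab: "\<bar>a1\<bar> * \<bar>a3\<bar> = \<bar>a2\<bar> * \<bar>a4\<bar>"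
  shows "a1 * a3 = a2 * a4"
proof -
  have "(b1 * b3) * (a2 * a4) > 0" using pos by (simp add: ac_simps)
  hence "sgn (b1 * b3) = sgn (a2 * a4)" by (rule pos_sgn_eq)
  hence "sgn (a1 * a3) = sgn (a2 * a4)" using s1 s3 by (simp add: sgn_mult)
  moreover have "\<bar>a1 * a3\<bar> = \<bar>a2 * a4\<bar>" using ab by (simp add: abs_mult)
  ultimately show ?thesis by (metis sgn_mult_abs)
qed

lemma sign6:
  fixes a1 a2 a3 a4 a5 a6 b1 b3 b5 :: real
  assumes pos: "b1 * a2 * b3 * a4 * b5 * a6 > 0" and s1: "sgn a1 = sgn b1" and s3: "sgn a3 = sgn b3"
    and s5: "sgn a5 = sgn b5"
    and ab: "\<bar>a1\<bar> * \<bar>a3\<bar> * \<bar>a5\<bar> = \<bar>a2\<bar> * \<bar>a4\<bar> * \<bar>a6\<bar>"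
  shows "a1 * a3 * a5 = a2 * a4 * a6"
proof -
  have "(b1 * b3 * b5) * (a2 * a4 * a6) > 0" using pos by (simp add: ac_simps)
  hence "sgn (b1 * b3 * b5) = sgn (a2 * a4 * a6)" by (rule pos_sgn_eq)
  hence "sgn (a1 * a3 * a5) = sgn (a2 * a4 * a6)" using s1 s3 s5 by (simp add: sgn_mult)
  moreover have "\<bar>a1 * a3 * a5\<bar> = \<bar>a2 * a4 * a6\<bar>" using ab by (simp add: abs_mult)
  ultimately show ?thesis by (metis sgn_mult_abs)
qed

lemma all4: "(\<forall>k<(4::nat). P k) \<longleftrightarrow> P 0 \<and> P 1 \<and> P 2 \<and> P 3"
  by (simp add: numeral_eq_Suc all_less_Suc' conj_assoc)
lemma all6: "(\<forall>k<(6::nat). P k) \<longleftrightarrow> P 0 \<and> P 1 \<and> P 2 \<and> P 3 \<and> P 4 \<and> P 5"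
  by (simp add: numeral_eq_Suc all_less_Suc' conj_assoc)
lemma prod4: "(\<Prod>k<(4::nat). f k) = f 0 * f 1 * f 2 * f 3"
  by (simp add: numeral_eq_Suc)
lemma prod6: "(\<Prod>k<(6::nat). f k) = f 0 * f 1 * f 2 * f 3 * f 4 * f 5"
  by (simp add: numeral_eq_Suc)
lemma prod2: "(\<Prod>k<(2::nat). f k) = f 0 * f 1"
  by (simp add: numeral_eq_Suc)
lemma prod3: "(\<Prod>k<(3::nat). f k) = f 0 * f 1 * f 2"
  by (simp add: numeral_eq_Suc)

locale dsr3 =
  fixes m :: nat and A B C :: "real mat"
  assumes C: "C \<in> carrier_mat m 3" and QA: "in_Q0 C A" and QB: "in_Q0 C (transpose_mat B)"
    and e4: "\<And>vs. e_cycle A B vs \<Longrightarrow> length vs = 4 \<Longrightarrow> s_cycle A B vs"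
    and o6: "\<And>vs. o_cycle A B vs \<Longrightarrow> length vs = 6 \<Longrightarrow> s_cycle A B vs"
begin

lemma dims: "dim_row A = m" "dim_col A = 3" "dim_row B = 3" "dim_col B = m"
  using C QA QB unfolding in_Q0_def by auto

lemma sgnAB: assumes "i < m" "j < 3" shows "0 \<le> A $$ (i,j) * B $$ (j,i)"
proof -
  have "A $$ (i,j) = 0 \<or> sgn (A $$ (i,j)) = sgn (C $$ (i,j))"
    using QA assms C unfolding in_Q0_def by auto
  moreover have "transpose_mat B $$ (i,j) = 0 \<or> sgn (transpose_mat B $$ (i,j)) = sgn (C $$ (i,j))"
  proof -
    have h: "\<forall>ii<dim_row C. \<forall>jj<dim_col C. transpose_mat B $$ (ii,jj) = 0 \<or> sgn (transpose_mat B $$ (ii,jj)) = sgn (C $$ (ii,jj))"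
      using QB unfolding in_Q0_def by blast
    show ?thesis using h[rule_format, of i j] assms C by simp
  qed
  moreover have "transpose_mat B $$ (i,j) = B $$ (j,i)" using assms dims by simp
  ultimately show ?thesis using sgn_prod_nonneg by metis
qed

lemma cyc4:
  assumes i: "i < m" and l: "l < m" and il: "i \<noteq> l" and j: "j < 3" and k: "k < 3" and jk: "j \<noteq> k"
    and pos: "B$$(j,i) * A$$(l,j) * B$$(k,l) * A$$(i,k) > 0"
  shows "A$$(i,j) * A$$(l,k) = A$$(l,j) * A$$(i,k)"
proof -
  define vs where "vs = [SV i, RV j, SV l, RV k]"
  have nz: "B$$(j,i) \<noteq> 0" "A$$(l,j) \<noteq> 0" "B$$(k,l) \<noteq> 0" "A$$(i,k) \<noteq> 0" using pos by auto
  have cyc: "dsr_cycle A B vs" unfolding dsr_cycle_def vs_def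
    using i l il j k jk nz by (simp add: all4 all_less_Suc' dsr_step_def dsr_vertex_ok_def dims)
  have "cycle_sign A B vs = sgn (B$$(j,i) * A$$(l,j) * B$$(k,l) * A$$(i,k))"
    unfolding cycle_sign_def cyc_edge_sign_def vs_def by (simp add: prod4 dsr_step_sign_def sgn_mult)
  hence "cycle_sign A B vs = 1" using pos by simp
  hence "e_cycle A B vs" using cyc unfolding e_cycle_def cycle_parity_def by (simp add: vs_def)
  hence sc: "s_cycle A B vs" using e4 by (simp add: vs_def)
  have L: "\<forall>k<4. cyc_edge_label A B vs k \<noteq> None"
    and P: "(\<Prod>ii<2. the (cyc_edge_label A B vs (2*ii))) = (\<Prod>ii<2. the (cyc_edge_label A B vs (2*ii+1)))"
  proof -
    have len: "length vs = 4" by (simp add: vs_def)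
    show "\<forall>k<4. cyc_edge_label A B vs k \<noteq> None" using sc unfolding s_cycle_def len by blast
    have "(\<Prod>ii<length vs div 2. the (cyc_edge_label A B vs (2*ii))) = (\<Prod>ii<length vs div 2. the (cyc_edge_label A B vs (2*ii+1)))"
      using sc unfolding s_cycle_def by blast
    then show "(\<Prod>ii<2. the (cyc_edge_label A B vs (2*ii))) = (\<Prod>ii<2. the (cyc_edge_label A B vs (2*ii+1)))"
      by (simp add: len)
  qed
  from L have l0: "A$$(i,j) \<noteq> 0 \<and> sgn (A$$(i,j)) = sgn (B$$(j,i))"
    by (auto simp: all4 all_less_Suc' cyc_edge_label_def vs_def dsr_step_label_def split: if_splits)
  from L have l2: "A$$(l,k) \<noteq> 0 \<and> sgn (A$$(l,k)) = sgn (B$$(k,l))"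
    by (auto simp: all4 all_less_Suc' cyc_edge_label_def vs_def dsr_step_label_def split: if_splits)
  from P have "\<bar>A$$(i,j)\<bar> * \<bar>A$$(l,k)\<bar> = \<bar>A$$(l,j)\<bar> * \<bar>A$$(i,k)\<bar>"
    using l0 l2 by (simp add: prod2 cyc_edge_label_def vs_def dsr_step_label_def)
  then show ?thesis using sign4[OF pos] l0 l2 by blast
qed

lemma cyc6:
  assumes p: "p < m" and q: "q < m" and r: "r < m" and d: "p \<noteq> q" "p \<noteq> r" "q \<noteq> r"
    and a: "a < 3" and b: "b < 3" and c: "c < 3" and d2: "a \<noteq> b" "a \<noteq> c" "b \<noteq> c"
    and pos: "B$$(a,p) * A$$(q,a) * B$$(b,q) * A$$(r,b) * B$$(c,r) * A$$(p,c) > 0"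
  shows "A$$(p,a) * A$$(q,b) * A$$(r,c) = A$$(q,a) * A$$(r,b) * A$$(p,c)"
proof -
  define vs where "vs = [SV p, RV a, SV q, RV b, SV r, RV c]"
  have nz: "B$$(a,p) \<noteq> 0" "A$$(q,a) \<noteq> 0" "B$$(b,q) \<noteq> 0" "A$$(r,b) \<noteq> 0" "B$$(c,r) \<noteq> 0" "A$$(p,c) \<noteq> 0"
    using pos by auto
  have cyc: "dsr_cycle A B vs" unfolding dsr_cycle_def vs_def
    using p q r d a b c d2 nz by (simp add: all6 all_less_Suc' dsr_step_def dsr_vertex_ok_def dims)
  have "cycle_sign A B vs = sgn (B$$(a,p) * A$$(q,a) * B$$(b,q) * A$$(r,b) * B$$(c,r) * A$$(p,c))"
    unfolding cycle_sign_def cyc_edge_sign_def vs_def by (simp add: prod6 dsr_step_sign_def sgn_mult)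
  hence "cycle_sign A B vs = 1" using pos by simp
  hence "o_cycle A B vs" using cyc unfolding o_cycle_def cycle_parity_def by (simp add: vs_def)
  hence sc: "s_cycle A B vs" using o6 by (simp add: vs_def)
  have L: "\<forall>k<6. cyc_edge_label A B vs k \<noteq> None"
    and P: "(\<Prod>ii<3. the (cyc_edge_label A B vs (2*ii))) = (\<Prod>ii<3. the (cyc_edge_label A B vs (2*ii+1)))"
  proof -
    have len: "length vs = 6" by (simp add: vs_def)
    show "\<forall>k<6. cyc_edge_label A B vs k \<noteq> None" using sc unfolding s_cycle_def len by blast
    have "(\<Prod>ii<length vs div 2. the (cyc_edge_label A B vs (2*ii))) = (\<Prod>ii<length vs div 2. the (cyc_edge_label A B vs (2*ii+1)))"
      using sc unfolding s_cycle_def by blast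
    then show "(\<Prod>ii<3. the (cyc_edge_label A B vs (2*ii))) = (\<Prod>ii<3. the (cyc_edge_label A B vs (2*ii+1)))"
      by (simp add: len)
  qed
  from L have l0: "A$$(p,a) \<noteq> 0 \<and> sgn (A$$(p,a)) = sgn (B$$(a,p))"
    by (auto simp: all6 all_less_Suc' cyc_edge_label_def vs_def dsr_step_label_def split: if_splits)
  from L have l2: "A$$(q,b) \<noteq> 0 \<and> sgn (A$$(q,b)) = sgn (B$$(b,q))"
    by (auto simp: all6 all_less_Suc' cyc_edge_label_def vs_def dsr_step_label_def split: if_splits)
  from L have l4: "A$$(r,c) \<noteq> 0 \<and> sgn (A$$(r,c)) = sgn (B$$(c,r))"
    by (auto simp: all6 all_less_Suc' cyc_edge_label_def vs_def dsr_step_label_def split: if_splits)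
  from P have "\<bar>A$$(p,a)\<bar> * \<bar>A$$(q,b)\<bar> * \<bar>A$$(r,c)\<bar> = \<bar>A$$(q,a)\<bar> * \<bar>A$$(r,b)\<bar> * \<bar>A$$(p,c)\<bar>"
    using l0 l2 l4 by (simp add: prod3 cyc_edge_label_def vs_def dsr_step_label_def)
  then show ?thesis using sign6[OF pos] l0 l2 l4 by blast
qed

end




lemma qt_core:
  fixes xij xlk xik xlj yij ylk yik ylj :: real
  assumes s: "xij*yij \<ge> 0" "xlk*ylk \<ge> 0" "xik*yik \<ge> 0" "xlj*ylj \<ge> 0"
    and c1: "yij*xlj*ylk*xik > 0 \<Longrightarrow> xij*xlk = xlj*xik"
    and c2: "ylj*xij*yik*xlk > 0 \<Longrightarrow> xlj*xik = xij*xlk"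
  shows "(yij*ylk - yik*ylj)*(xij*xlk - xik*xlj) \<ge> 0"
proof (cases "xij*xlk = xik*xlj")
  case True then show ?thesis by simp
next
  case False
  have n1: "\<not> yij*xlj*ylk*xik > 0" using c1 False by (auto simp: mult.commute)
  have n2: "\<not> ylj*xij*yik*xlk > 0" using c2 False by (auto simp: mult.commute)
  have e: "(yij*ylk - yik*ylj)*(xij*xlk - xik*xlj) = (xij*yij)*(xlk*ylk) + (xik*yik)*(xlj*ylj) - yij*xlj*ylk*xik - ylj*xij*yik*xlk"
    by (simp add: algebra_simps)
  have "(xij*yij)*(xlk*ylk) \<ge> 0" "(xik*yik)*(xlj*ylj) \<ge> 0" using s by simp_all
  then show ?thesis unfolding e using n1 n2 by linarith
qed

lemma le_from: "(0 < s * t \<Longrightarrow> s = u) \<Longrightarrow> 0 \<le> u * t \<Longrightarrow> s * t \<le> u * (t::real)"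
  by (cases "0 < s * t") auto

definition PP :: "real mat \<Rightarrow> real mat \<Rightarrow> nat \<Rightarrow> nat \<Rightarrow> nat \<Rightarrow> real" where
  "PP A B i = (\<lambda>j k. B $$ (j,i) * A $$ (i,k))"

context dsr3 begin

lemma qt_nonneg:
  assumes i: "i < m" and l: "l < m" and il: "i \<noteq> l" and j: "j < 3" and k: "k < 3"
  shows "0 \<le> qt (\<lambda>i k. A $$ (i,k)) (\<lambda>i j. B $$ (j,i)) i l j k"
proof (cases "j = k")
  case True then show ?thesis by (simp add: qt_def)
next
  case False
  show ?thesis unfolding qt_def
    apply (rule qt_core)
    using sgnAB[OF i j] sgnAB[OF l k] sgnAB[OF i k] sgnAB[OF l j] apply simp_all
    using cyc4[OF i l il j k False] cyc4[OF l i il[symmetric] j k False] by simp_all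
qed

lemma six1:
  assumes r: "r1 < m" "r2 < m" "r3 < m" and d: "r1 \<noteq> r2" "r1 \<noteq> r3" "r2 \<noteq> r3"
    and a: "a < 3" and b: "b < 3" and c: "c < 3" and d2: "a \<noteq> b" "a \<noteq> c" "b \<noteq> c"
  shows "XX (\<lambda>i k. A $$ (i,k)) r1 r2 r3 b c a * XX (\<lambda>i j. B $$ (j,i)) r1 r2 r3 a b c
     \<le> XX (\<lambda>i k. A $$ (i,k)) r1 r2 r3 a b c * XX (\<lambda>i j. B $$ (j,i)) r1 r2 r3 a b c"
proof (rule le_from)
  assume pos0: "0 < XX (\<lambda>i k. A $$ (i,k)) r1 r2 r3 b c a * XX (\<lambda>i j. B $$ (j,i)) r1 r2 r3 a b c"
  have pos: "B$$(a,r1) * A$$(r3,a) * B$$(c,r3) * A$$(r2,c) * B$$(b,r2) * A$$(r1,b) > 0"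
    using pos0 by (simp add: XX_def mult_ac)
  have "A$$(r1,a) * A$$(r3,c) * A$$(r2,b) = A$$(r3,a) * A$$(r2,c) * A$$(r1,b)"
    by (rule cyc6[OF r(1) r(3) r(2) d(2) d(1) d(3)[symmetric] a c b d2(2) d2(1) d2(3)[symmetric] pos])
  then show "XX (\<lambda>i k. A $$ (i,k)) r1 r2 r3 b c a = XX (\<lambda>i k. A $$ (i,k)) r1 r2 r3 a b c"
    by (simp add: XX_def mult_ac)
next
  show "0 \<le> XX (\<lambda>i k. A $$ (i,k)) r1 r2 r3 a b c * XX (\<lambda>i j. B $$ (j,i)) r1 r2 r3 a b c"
    unfolding XXprod using sgnAB[OF r(1) a] sgnAB[OF r(2) b] sgnAB[OF r(3) c] by simp
qed

lemma six2:
  assumes r: "r1 < m" "r2 < m" "r3 < m" and d: "r1 \<noteq> r2" "r1 \<noteq> r3" "r2 \<noteq> r3"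
    and a: "a < 3" and b: "b < 3" and c: "c < 3" and d2: "a \<noteq> b" "a \<noteq> c" "b \<noteq> c"
  shows "XX (\<lambda>i k. A $$ (i,k)) r1 r2 r3 c a b * XX (\<lambda>i j. B $$ (j,i)) r1 r2 r3 a b c
     \<le> XX (\<lambda>i k. A $$ (i,k)) r1 r2 r3 a b c * XX (\<lambda>i j. B $$ (j,i)) r1 r2 r3 a b c"
proof (rule le_from)
  assume pos0: "0 < XX (\<lambda>i k. A $$ (i,k)) r1 r2 r3 c a b * XX (\<lambda>i j. B $$ (j,i)) r1 r2 r3 a b c"
  have pos: "B$$(a,r1) * A$$(r2,a) * B$$(b,r2) * A$$(r3,b) * B$$(c,r3) * A$$(r1,c) > 0"
    using pos0 by (simp add: XX_def mult_ac)
  have "A$$(r1,a) * A$$(r2,b) * A$$(r3,c) = A$$(r2,a) * A$$(r3,b) * A$$(r1,c)"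
    by (rule cyc6[OF r(1) r(2) r(3) d(1) d(2) d(3) a b c d2 pos])
  then show "XX (\<lambda>i k. A $$ (i,k)) r1 r2 r3 c a b = XX (\<lambda>i k. A $$ (i,k)) r1 r2 r3 a b c"
    by (simp add: XX_def mult_ac)
next
  show "0 \<le> XX (\<lambda>i k. A $$ (i,k)) r1 r2 r3 a b c * XX (\<lambda>i j. B $$ (j,i)) r1 r2 r3 a b c"
    unfolding XXprod using sgnAB[OF r(1) a] sgnAB[OF r(2) b] sgnAB[OF r(3) c] by simp
qed

lemma FF_distinct:
  assumes r: "r1 < m" "r2 < m" "r3 < m" and d: "r1 \<noteq> r2" "r1 \<noteq> r3" "r2 \<noteq> r3"
  shows "0 \<le> FF (PP A B r1) (PP A B r2) (PP A B r3)"
  unfolding PP_def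
proof (rule key_ineq[where x = "\<lambda>i k. A $$ (i,k)" and y = "\<lambda>i j. B $$ (j,i)", simplified])
  show "\<And>r j. r = r1 \<or> r = r2 \<or> r = r3 \<Longrightarrow> j < 3 \<Longrightarrow> 0 \<le> A $$ (r, j) * B $$ (j, r)"
    using sgnAB r by auto
  show "\<And>a b j k. a = r1 \<or> a = r2 \<or> a = r3 \<Longrightarrow> b = r1 \<or> b = r2 \<or> b = r3 \<Longrightarrow> a \<noteq> b \<Longrightarrow> j < 3 \<Longrightarrow> k < 3
      \<Longrightarrow> 0 \<le> qt (\<lambda>i k. A $$ (i,k)) (\<lambda>i j. B $$ (j,i)) a b j k"
    using qt_nonneg r by auto
  show "r1 \<noteq> r2" "r1 \<noteq> r3" "r2 \<noteq> r3" by fact+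
  show "\<And>a b c. a < 3 \<Longrightarrow> b < 3 \<Longrightarrow> c < 3 \<Longrightarrow> a \<noteq> b \<and> a \<noteq> c \<and> b \<noteq> c \<Longrightarrow>
       XX (\<lambda>i k. A $$ (i,k)) r1 r2 r3 b c a * XX (\<lambda>i j. B $$ (j,i)) r1 r2 r3 a b c
     \<le> XX (\<lambda>i k. A $$ (i,k)) r1 r2 r3 a b c * XX (\<lambda>i j. B $$ (j,i)) r1 r2 r3 a b c \<and>
       XX (\<lambda>i k. A $$ (i,k)) r1 r2 r3 c a b * XX (\<lambda>i j. B $$ (j,i)) r1 r2 r3 a b c
     \<le> XX (\<lambda>i k. A $$ (i,k)) r1 r2 r3 a b c * XX (\<lambda>i j. B $$ (j,i)) r1 r2 r3 a b c"
    using six1[OF r d] six2[OF r d] by blast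
qed

end




lemma sum3: "(\<Sum>k\<in>{0..<3::nat}. f k) = f 0 + f 1 + f 2"
  by (simp add: eval_nat_numeral atLeast0LessThan lessThan_Suc add_ac)

context dsr3 begin

lemma rep_nonneg:
  assumes a: "a < m" and b: "b < m"
  shows "0 \<le> FF (PP A B a) (PP A B a) (PP A B b)"
proof -
  have I: "FF (PP A B a) (PP A B a) (PP A B b) = 2 * (A$$(a,0) * B$$(0,a) + A$$(a,1) * B$$(1,a) + A$$(a,2) * B$$(2,a)) *
     (qt (\<lambda>i k. A $$ (i,k)) (\<lambda>i j. B $$ (j,i)) a b 0 1 + qt (\<lambda>i k. A $$ (i,k)) (\<lambda>i j. B $$ (j,i)) a b 0 2
      + qt (\<lambda>i k. A $$ (i,k)) (\<lambda>i j. B $$ (j,i)) a b 1 2)"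
    unfolding PP_def using rep_identity[where x = "\<lambda>i k. A $$ (i,k)" and y = "\<lambda>i j. B $$ (j,i)" and a = a and b = b]
    by simp
  have t: "0 \<le> A$$(a,0) * B$$(0,a) + A$$(a,1) * B$$(1,a) + A$$(a,2) * B$$(2,a)"
    using sgnAB[OF a, of 0] sgnAB[OF a, of 1] sgnAB[OF a, of 2] by simp
  have q: "0 \<le> qt (\<lambda>i k. A $$ (i,k)) (\<lambda>i j. B $$ (j,i)) a b j k" if "j < 3" "k < 3" for j k
  proof (cases "a = b")
    case True then show ?thesis by (simp add: qt_def algebra_simps)
  next
    case False then show ?thesis using qt_nonneg[OF a b False that] by simp
  qed
  show ?thesis unfolding I using t q[of 0 1] q[of 0 2] q[of 1 2] by simp
qed

lemma FF_all:
  assumes "i < m" "l < m" "p < m"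
  shows "0 \<le> FF (PP A B i) (PP A B l) (PP A B p)"
proof -
  consider "i = l" | "i = p" | "l = p" | "i \<noteq> l" "i \<noteq> p" "l \<noteq> p" by blast
  then show ?thesis
  proof cases
    case 1 then show ?thesis using rep_nonneg assms by simp
  next
    case 2 then show ?thesis using rep_nonneg[of p l] assms FF_sym2 by metis
  next
    case 3 then show ?thesis using rep_nonneg[of p i] assms FF_sym1 FF_sym2 by metis
  next
    case 4 then show ?thesis using FF_distinct assms by simp
  qed
qed

definition nn :: "nat \<Rightarrow> nat \<Rightarrow> real" where
  "nn = (\<lambda>j k. \<Sum>i<m. PP A B i j k)"

lemma FF_nn: "0 \<le> FF nn nn nn"
  unfolding nn_def FF_sum3 by (intro sum_nonneg FF_all) auto

lemma BA_nn: assumes "j < 3" "k < 3" shows "(B * A) $$ (j,k) = nn j k"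
  using assms dims by (simp add: nn_def PP_def scalar_prod_def atLeast0LessThan)

lemma no_ev: "\<not> (\<exists>z::complex. eigenvalue (map_mat complex_of_real (A * B)) z \<and> Im z \<noteq> 0 \<and> Re z < 0)"
proof
  assume "\<exists>z::complex. eigenvalue (map_mat complex_of_real (A * B)) z \<and> Im z \<noteq> 0 \<and> Re z < 0"
  then obtain z where ev: "eigenvalue (map_mat complex_of_real (A * B)) z" and imz: "Im z \<noteq> 0" and rez: "Re z < 0"
    by blast
  obtain v where v: "v \<in> carrier_vec m" "v \<noteq> 0\<^sub>v m" "map_mat complex_of_real (A * B) *\<^sub>v v = z \<cdot>\<^sub>v v"
    using ev unfolding eigenvalue_def eigenvector_def by (auto simp: dims)
  define cA where "cA = map_mat complex_of_real A"
  define cB where "cB = map_mat complex_of_real B"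
  have cA: "cA \<in> carrier_mat m 3" and cB: "cB \<in> carrier_mat 3 m" unfolding cA_def cB_def using dims by auto
  have AB: "map_mat complex_of_real (A * B) = cA * cB"
    by (rule eq_matI) (auto simp: cA_def cB_def dims scalar_prod_def of_real_sum intro!: sum.cong)
  have BA: "map_mat complex_of_real (B * A) = cB * cA"
    by (rule eq_matI) (auto simp: cA_def cB_def dims scalar_prod_def of_real_sum intro!: sum.cong)
  define w where "w = cB *\<^sub>v v"
  have w: "w \<in> carrier_vec 3" unfolding w_def carrier_vec_def using cB by simp
  have Mv: "cA *\<^sub>v w = z \<cdot>\<^sub>v v" unfolding w_def using v(3) AB cA cB v(1) by simp
  have z0: "z \<noteq> 0" using imz by auto
  have wnz: "w \<noteq> 0\<^sub>v 3"
  proof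
    assume w0: "w = 0\<^sub>v 3"
    have "cA *\<^sub>v w = 0\<^sub>v m" unfolding w0 using cA by (intro eq_vecI) (auto simp: scalar_prod_def)
    hence zv: "z \<cdot>\<^sub>v v = 0\<^sub>v m" using Mv by simp
    have "v = 0\<^sub>v m"
    proof (rule eq_vecI)
      fix i assume i: "i < dim_vec (0\<^sub>v m :: complex vec)"
      have "(z \<cdot>\<^sub>v v) $ i = 0" using zv i by simp
      then show "v $ i = (0\<^sub>v m :: complex vec) $ i" using i v(1) z0 by simp
    qed (use v(1) in simp)
    then show False using v(2) by simp
  qed
  have Nw: "(cB * cA) *\<^sub>v w = z \<cdot>\<^sub>v w"
  proof -
    have "(cB * cA) *\<^sub>v w = cB *\<^sub>v (cA *\<^sub>v w)" using cA cB w by simp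
    also have "\<dots> = cB *\<^sub>v (z \<cdot>\<^sub>v v)" using Mv by simp
    also have "\<dots> = z \<cdot>\<^sub>v (cB *\<^sub>v v)" using mult_mat_vec[OF cB v(1)] by simp
    finally show ?thesis unfolding w_def .
  qed
  have E: "(\<Sum>k\<in>{0..<3}. complex_of_real (nn j k) * w $ k) = z * w $ j" if j: "j < 3" for j
  proof -
    have "((cB * cA) *\<^sub>v w) $ j = (z \<cdot>\<^sub>v w) $ j" using Nw by simp
    moreover have "((cB * cA) *\<^sub>v w) $ j = (\<Sum>k\<in>{0..<3}. complex_of_real (nn j k) * w $ k)"
      using j w cA cB unfolding BA[symmetric]
      by (auto simp: scalar_prod_def BA_nn[symmetric] dims intro!: sum.cong)
    ultimately show ?thesis using j w by simp
  qed
  have E0: "of_real (nn 0 0) * w$0 + of_real (nn 0 1) * w$1 + of_real (nn 0 2) * w$2 = z * w$0"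
    using E[of 0] by (simp add: sum3)
  have E1: "of_real (nn 1 0) * w$0 + of_real (nn 1 1) * w$1 + of_real (nn 1 2) * w$2 = z * w$1"
    using E[of 1] by (simp add: sum3)
  have E2: "of_real (nn 2 0) * w$0 + of_real (nn 2 1) * w$1 + of_real (nn 2 2) * w$2 = z * w$2"
    using E[of 2] by (simp add: sum3)
  have nz: "w$0 \<noteq> 0 \<or> w$1 \<noteq> 0 \<or> w$2 \<noteq> 0"
  proof (rule ccontr)
    assume "\<not> ?thesis"
    hence "w = 0\<^sub>v 3"
      using w by (intro eq_vecI) (auto simp: less_Suc_eq eval_nat_numeral)
    then show False using wnz by simp
  qed
  define c1 where "c1 = trf nn"
  define c2 where "c2 = Qf nn nn / 2"
  define c3 where "c3 = d3 nn nn nn"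
  have c1e: "c1 = nn 0 0 + nn 1 1 + nn 2 2" by (simp add: c1_def trf_def)
  have c2e: "c2 = nn 0 0 * nn 1 1 - nn 0 1 * nn 1 0 + nn 0 0 * nn 2 2 - nn 0 2 * nn 2 0 + nn 1 1 * nn 2 2 - nn 1 2 * nn 2 1"
    by (simp add: c2_def Qf_def field_simps)
  have c3e: "c3 = nn 0 0 * nn 1 1 * nn 2 2 - nn 0 0 * nn 1 2 * nn 2 1 - nn 0 1 * nn 1 0 * nn 2 2
      + nn 0 1 * nn 1 2 * nn 2 0 + nn 0 2 * nn 1 0 * nn 2 1 - nn 0 2 * nn 1 1 * nn 2 0"
    by (simp add: c3_def d3_def)
  have cub: "z^3 - of_real c1 * z^2 + of_real c2 * z - of_real c3 = 0"
    using cubic_root[OF E0 E1 E2 nz] unfolding c1e c2e c3e by simp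
  have key: "c1*c2 - c3 = 2 * Re z * ((c1 - Re z)^2 + (Im z)^2)" by (rule re_im[OF cub imz])
  have "FF nn nn nn = 6 * (c1*c2 - c3)" unfolding FF_def c1_def c2_def c3_def by simp
  hence "0 \<le> 2 * Re z * ((c1 - Re z)^2 + (Im z)^2)" using FF_nn key by simp
  moreover have "0 < (c1 - Re z)^2 + (Im z)^2" using imz by (simp add: add_nonneg_pos)
  ultimately have "0 \<le> Re z" by (simp add: zero_le_mult_iff)
  then show False using rez by simp
qed

end


theorem corollary6p1:
  fixes m :: nat and A B C :: "real mat"
  assumes "m \<ge> 1"
    and "C \<in> carrier_mat m 3"
    and "in_Q0 C A"
    and "in_Q0 C (transpose_mat B)"
    and "\<And>vs. e_cycle A B vs \<Longrightarrow> length vs = 4 \<Longrightarrow> s_cycle A B vs"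
    and "\<And>vs. o_cycle A B vs \<Longrightarrow> length vs = 6 \<Longrightarrow> s_cycle A B vs"
  shows "\<not> (\<exists>z::complex. eigenvalue (map_mat complex_of_real (A * B)) z \<and>
                  Im z \<noteq> 0 \<and> Re z < 0)"
proof -
  interpret dsr3 m A B C by (rule dsr3.intro[OF assms(2-6)])
  show ?thesis by (rule no_ev)
qed

end
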